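(* There exists a function $\mathrm{B}:2^{<\omega}\times 2^{<\omega}\to\mathbb{N}$ such that: (1) $\mathrm{B}(x|y)$ is upper semi-computable uniformly in $x,y$; (2) there is a constant $c$ such that $\mathrm{B}(x|y)\le |x|+c$ for all $x,y$; (3) there is a constant $d$, independent of $y$, such that $|\{x : \mathrm{B}(x|y)\le n\}|\le d\cdot 2^n$ for all $y$ and $n$; (4) for every partial computable function $f:2^{<\omega}\to 2^{<\omega}$ there is a constant $c_f$ such that $\mathrm{B}(f(x)|y)\le \mathrm{B}(x|y)+c_f$ for all $y$ and all $x$ in the domain of $f$; (5) there is a constant $e$ such that $\mathrm{B}(x|x)\le e$ for all $x$; (6) $|\mathrm{B}(x|y)-\mathrm{C}(x|y)|$ is unbounded over $x,y\in 2^{<\omega}$.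
   Context: $2^{<\omega}$ is the set of finite binary strings; $|x|$ is the length of $x$; $\langle\cdot,\cdot\rangle$ is a fixed computable pairing function on strings. For a machine $T$, $\mathrm{C}_T(x|y)=\min\{|z| : T(\langle z,y\rangle)=x\}$. Fix an optimal machine $\mathbb{U}$ (for every machine $T$ there is $c_T$ with $\mathrm{C}_{\mathbb{U}}(x|y)\le \mathrm{C}_T(x|y)+c_T$ for all $x,y$) and set $\mathrm{C}(x|y)=\mathrm{C}_{\mathbb{U}}(x|y)$. Upper semi-computable uniformly in $x,y$ means the predicate "$\mathrm{B}(x|y)\le k$" is computably enumerable uniformly in $x,y,k$. *)

theory Defs
  imports Main "HOL-Library.Nat_Bijection" "HOL-Library.Extended_Nat"
begin

datatype recf =
    Z
  | S
  | Fst
  | Snd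
  | Comp recf recf
  | Pair recf recf
  | Rec recf recf
  | Mu recf

inductive eval :: "recf \<Rightarrow> nat \<Rightarrow> nat \<Rightarrow> bool" where
  eval_Z: "eval Z n 0"
| eval_S: "eval S n (Suc n)"
| eval_Fst: "eval Fst n (fst (prod_decode n))"
| eval_Snd: "eval Snd n (snd (prod_decode n))"
| eval_Comp: "eval g n m \<Longrightarrow> eval f m k \<Longrightarrow> eval (Comp f g) n k"
| eval_Pair: "eval f n a \<Longrightarrow> eval g n b \<Longrightarrow> eval (Pair f g) n (prod_encode (a, b))"
| eval_Rec0: "eval f x v \<Longrightarrow> eval (Rec f g) (prod_encode (x, 0)) v"
| eval_RecS: "eval (Rec f g) (prod_encode (x, k)) u \<Longrightarrow>
      eval g (prod_encode (x, prod_encode (k, u))) v \<Longrightarrow>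
      eval (Rec f g) (prod_encode (x, Suc k)) v"
| eval_Mu: "eval f (prod_encode (n, m)) 0 \<Longrightarrow>
      (\<forall>i<m. \<exists>v. eval f (prod_encode (n, i)) v \<and> v \<noteq> 0) \<Longrightarrow>
      eval (Mu f) n m"

type_synonym str = "bool list"

text \<open>Bijective base-2 coding of finite binary strings.\<close>
fun enc :: "str \<Rightarrow> nat" where
  "enc [] = 0"
| "enc (b # x) = 2 * enc x + (if b then 2 else 1)"

function dec :: "nat \<Rightarrow> str" where
  "dec n = (if n = 0 then [] else if even n then True # dec ((n - 2) div 2)
            else False # dec ((n - 1) div 2))"
  by auto
termination by (relation "measure id") auto

definition str_pair :: "str \<Rightarrow> str \<Rightarrow> str" where
  "str_pair z y = dec (prod_encode (enc z, enc y))"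

definition partial_computable :: "(str \<Rightarrow> str option) \<Rightarrow> bool" where
  "partial_computable f \<longleftrightarrow>
     (\<exists>r. \<forall>x v. eval r (enc x) v \<longleftrightarrow> (\<exists>z. f x = Some z \<and> v = enc z))"

definition ce_set :: "nat set \<Rightarrow> bool" where
  "ce_set A \<longleftrightarrow> (\<exists>r. \<forall>n. n \<in> A \<longleftrightarrow> (\<exists>v. eval r n v))"

definition upper_semicomputable :: "(str \<Rightarrow> str \<Rightarrow> nat) \<Rightarrow> bool" where
  "upper_semicomputable B \<longleftrightarrow>
     ce_set {prod_encode (enc x, prod_encode (enc y, k)) | x y k. B x y \<le> k}"

definition Ccond :: "(str \<Rightarrow> str option) \<Rightarrow> str \<Rightarrow> str \<Rightarrow> enat" where
  "Ccond T x y = (INF z \<in> {z. T (str_pair z y) = Some x}. enat (length z))"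

definition optimal_machine :: "(str \<Rightarrow> str option) \<Rightarrow> bool" where
  "optimal_machine U \<longleftrightarrow> partial_computable U \<and>
     (\<forall>T. partial_computable T \<longrightarrow>
        (\<exists>c::nat. \<forall>x y. Ccond U x y \<le> Ccond T x y + enat c))"

end

theory Submission
  imports Defs
begin



declare dec.simps[simp del]

lemma dec_0 [simp]: "dec 0 = []" by (subst dec.simps) simp

lemma dec_pos: "n > 0 \<Longrightarrow> dec n = (if even n then True # dec ((n - 1) div 2) else False # dec ((n - 1) div 2))"
proof -
  assume "n > 0"
  moreover have "even n \<Longrightarrow> (n - 2) div 2 = (n - 1) div 2" by presburger
  ultimately show ?thesis by (subst dec.simps) auto
qed

lemma enc_dec [simp]: "enc (dec n) = n"
proof (induction n rule: less_induct)
  case (less n)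
  show ?case
  proof (cases "n = 0")
    case True then show ?thesis by simp
  next
    case False
    then have lt: "(n - 1) div 2 < n" by simp
    show ?thesis using False less[OF lt] by (simp add: dec_pos) presburger
  qed
qed

lemma enc_inj_aux: "enc x = enc y \<Longrightarrow> x = y"
proof (induction x arbitrary: y)
  case Nil then show ?case by (cases y) (auto split: if_splits)
next
  case (Cons a x)
  then show ?case by (cases y) (auto split: if_splits, presburger+)
qed

lemma enc_eq_iff [simp]: "enc x = enc y \<longleftrightarrow> x = y"
  using enc_inj_aux by blast

lemma dec_enc [simp]: "dec (enc x) = x"
  using enc_dec enc_inj_aux by blast

lemma inj_enc: "inj enc"
  by (rule injI) simp

lemma enc_bounds: "2 ^ length z \<le> enc z + 1 \<and> enc z + 2 \<le> 2 ^ (length z + 1)"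
  by (induction z) auto

lemma len_le_iff: "length z \<le> j \<longleftrightarrow> enc z + 2 \<le> 2 ^ (j + 1)"
proof
  assume "length z \<le> j"
  then have "(2::nat) ^ (length z + 1) \<le> 2 ^ (j+1)" by (intro power_increasing) auto
  with enc_bounds[of z] show "enc z + 2 \<le> 2 ^ (j + 1)" by linarith
next
  assume a: "enc z + 2 \<le> 2 ^ (j + 1)"
  with enc_bounds[of z] have "(2::nat) ^ length z < 2 ^ (j+1)" by linarith
  then show "length z \<le> j" using power_strict_increasing_iff[of "2::nat" "length z" "j+1"] by simp
qed

lemma enc_str_pair [simp]: "enc (str_pair z y) = prod_encode (enc z, enc y)"
  by (simp add: str_pair_def)

inductive_cases evalZE: "eval Z n v"
inductive_cases evalSE: "eval S n v"
inductive_cases evalFstE: "eval Fst n v"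
inductive_cases evalSndE: "eval Snd n v"
inductive_cases evalCompE: "eval (Comp f g) n v"
inductive_cases evalPairE: "eval (recf.Pair f g) n v"
inductive_cases evalRecE: "eval (Rec f g) n v"
inductive_cases evalMuE: "eval (Mu f) n v"

lemma eval_det: "eval f n v \<Longrightarrow> eval f n w \<Longrightarrow> v = w"
proof (induction arbitrary: w rule: eval.induct)
  case (eval_Z n) then show ?case by (blast elim: evalZE)
next
  case (eval_S n) then show ?case by (blast elim: evalSE)
next
  case (eval_Fst n) then show ?case by (blast elim: evalFstE)
next
  case (eval_Snd n) then show ?case by (blast elim: evalSndE)
next
  case (eval_Comp g n m f k)
  from eval_Comp.prems obtain m' where "eval g n m'" "eval f m' w" by (blast elim: evalCompE)
  with eval_Comp.IH show ?case by metis
next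
  case (eval_Pair f n a g b)
  from eval_Pair.prems obtain a' b' where "eval f n a'" "eval g n b'" "w = prod_encode (a', b')"
    by (blast elim: evalPairE)
  with eval_Pair.IH show ?case by metis
next
  case (eval_Rec0 f x v g)
  from eval_Rec0.prems show ?case
    by (rule evalRecE) (use eval_Rec0.IH in auto)
next
  case (eval_RecS f g x k u v)
  from eval_RecS.prems show ?case
  proof (rule evalRecE)
    fix x' k' u'
    assume h: "prod_encode (x, Suc k) = prod_encode (x', Suc k')"
      "eval (Rec f g) (prod_encode (x', k')) u'" "eval g (prod_encode (x', prod_encode (k', u'))) w"
    then have "x' = x" "k' = k" by simp_all
    with h eval_RecS.IH(1) have "u' = u" by metis
    with h \<open>x' = x\<close> \<open>k' = k\<close> eval_RecS.IH(2) show ?thesis by metis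
  qed simp
next
  case (eval_Mu f n m)
  note IH1 = eval_Mu.IH(1) and IH2 = eval_Mu.IH(2)
  from eval_Mu.prems show ?case
  proof (rule evalMuE)
    assume 1: "eval f (prod_encode (n, w)) 0" "\<forall>i<w. \<exists>v. eval f (prod_encode (n, i)) v \<and> 0 < v"
    show ?thesis
    proof (rule ccontr)
      assume "m \<noteq> w"
      then consider "m < w" | "w < m" by linarith
      then show False
      proof cases
        case a: 1
        from 1(2) a obtain v where v: "eval f (prod_encode (n, m)) v" "0 < v" by blast
        from IH1 v(1) have "0 = v" by blast
        with v(2) show False by simp
      next
        case b: 2
        from IH2 b obtain v where v: "\<And>w'. eval f (prod_encode (n, w)) w' \<Longrightarrow> v = w'" "v \<noteq> 0" by blast
        from v(1)[OF 1(1)] v(2) show False by simp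
      qed
    qed
  qed
qed

section \<open>Total computable functions\<close>

definition tot :: "(nat \<Rightarrow> nat) \<Rightarrow> bool" where
  "tot h \<longleftrightarrow> (\<exists>r. \<forall>n. eval r n (h n))"

abbreviation pl :: "nat \<Rightarrow> nat" where "pl n \<equiv> fst (prod_decode n)"
abbreviation pr :: "nat \<Rightarrow> nat" where "pr n \<equiv> snd (prod_decode n)"

lemma tot_0: "tot (\<lambda>n. 0)"
  unfolding tot_def by (metis eval_Z)

lemma tot_Suc: "tot f \<Longrightarrow> tot (\<lambda>n. Suc (f n))"
  unfolding tot_def by (metis eval_S eval_Comp)

lemma tot_fst: "tot f \<Longrightarrow> tot (\<lambda>n. pl (f n))"
  unfolding tot_def by (metis eval_Fst eval_Comp)

lemma tot_snd: "tot f \<Longrightarrow> tot (\<lambda>n. pr (f n))"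
  unfolding tot_def by (metis eval_Snd eval_Comp)

lemma tot_comp: "tot f \<Longrightarrow> tot g \<Longrightarrow> tot (\<lambda>n. f (g n))"
  unfolding tot_def by (metis eval_Comp)

lemma tot_pair: "tot f \<Longrightarrow> tot g \<Longrightarrow> tot (\<lambda>n. prod_encode (f n, g n))"
  unfolding tot_def by (metis eval_Pair)

lemma tot_id: "tot (\<lambda>n. n)"
proof -
  have "tot (\<lambda>n. prod_encode (pl n, pr n))"
    unfolding tot_def by (metis eval_Pair eval_Fst eval_Snd)
  then show ?thesis by simp
qed

lemma tot_const: "tot (\<lambda>n. c)"
  by (induction c) (auto intro: tot_0 tot_Suc)

primrec precf :: "(nat \<Rightarrow> nat) \<Rightarrow> (nat \<Rightarrow> nat) \<Rightarrow> nat \<Rightarrow> nat \<Rightarrow> nat" where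
  "precf f g x 0 = f x"
| "precf f g x (Suc k) = g (prod_encode (x, prod_encode (k, precf f g x k)))"

lemma tot_precf:
  assumes "tot f" "tot g" "tot a" "tot b"
  shows "tot (\<lambda>n. precf f g (a n) (b n))"
proof -
  obtain rf where rf: "\<And>n. eval rf n (f n)" using assms(1) unfolding tot_def by blast
  obtain rg where rg: "\<And>n. eval rg n (g n)" using assms(2) unfolding tot_def by blast
  have "eval (Rec rf rg) (prod_encode (x, k)) (precf f g x k)" for x k
    by (induction k) (auto intro: eval_Rec0 eval_RecS rf rg)
  then have "tot (\<lambda>n. precf f g (pl n) (pr n))"
    unfolding tot_def by (metis prod_decode_inverse prod.collapse)
  from tot_comp[OF this tot_pair[OF assms(3,4)]] show ?thesis by simp
qed

lemma tot_cong: "tot f \<Longrightarrow> (\<And>n. f n = g n) \<Longrightarrow> tot g"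
  by (metis ext)

lemma tot_add: assumes "tot a" "tot b" shows "tot (\<lambda>n. a n + b n)"
proof -
  have e: "precf (\<lambda>x. x) (\<lambda>m. Suc (pr (pr m))) x k = x + k" for x k by (induction k) auto
  show ?thesis
    by (rule tot_cong[OF tot_precf[OF tot_id tot_Suc[OF tot_snd[OF tot_snd[OF tot_id]]] assms]]) (simp add: e)
qed

lemma tot_pred: assumes "tot a" shows "tot (\<lambda>n. a n - 1)"
proof -
  have e: "precf (\<lambda>x. 0) (\<lambda>m. pl (pr m)) x k = k - 1" for x k by (induction k) auto
  show ?thesis
    by (rule tot_cong[OF tot_precf[OF tot_0 tot_fst[OF tot_snd[OF tot_id]] tot_0 assms]]) (simp add: e)
qed

lemma tot_minus: assumes "tot a" "tot b" shows "tot (\<lambda>n. a n - b n)"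
proof -
  have e: "precf (\<lambda>x. x) (\<lambda>m. pr (pr m) - 1) x k = x - k" for x k by (induction k) auto
  show ?thesis
    by (rule tot_cong[OF tot_precf[OF tot_id tot_pred[OF tot_snd[OF tot_snd[OF tot_id]]] assms]]) (simp add: e[simplified])
qed

lemma tot_if0: assumes "tot c" "tot a" "tot b" shows "tot (\<lambda>n. if c n = 0 then a n else b n)"
proof -
  have e: "precf a (\<lambda>m. b (pl m)) x k = (if k = 0 then a x else b x)" for x k by (cases k) auto
  show ?thesis
    by (rule tot_cong[OF tot_precf[OF assms(2) tot_comp[OF assms(3) tot_fst[OF tot_id]] tot_id assms(1)]]) (simp add: e)
qed

lemma tot_mult: assumes "tot a" "tot b" shows "tot (\<lambda>n. a n * b n)"
proof -
  have e: "precf (\<lambda>x. 0) (\<lambda>m. pr (pr m) + pl m) x k = x * k" for x k by (induction k) auto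
  show ?thesis
    by (rule tot_cong[OF tot_precf[OF tot_0 tot_add[OF tot_snd[OF tot_snd[OF tot_id]] tot_fst[OF tot_id]] assms]]) (simp add: e)
qed

lemma tot_pow2: assumes "tot a" shows "tot (\<lambda>n. 2 ^ a n)"
proof -
  have e: "precf (\<lambda>x. 1) (\<lambda>m. pr (pr m) + pr (pr m)) x k = 2 ^ k" for x k by (induction k) auto
  show ?thesis
    by (rule tot_cong[OF tot_precf[OF tot_const[of 1] tot_add[OF tot_snd[OF tot_snd[OF tot_id]] tot_snd[OF tot_snd[OF tot_id]]] tot_0 assms]]) (simp add: e[simplified])
qed

lemma tot_mod2: assumes "tot a" shows "tot (\<lambda>n. a n mod 2)"
proof -
  have e: "precf (\<lambda>x. 0) (\<lambda>m. 1 - pr (pr m)) x k = k mod 2" for x k by (induction k) (auto simp: mod_Suc)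
  show ?thesis
    by (rule tot_cong[OF tot_precf[OF tot_0 tot_minus[OF tot_const[of 1] tot_snd[OF tot_snd[OF tot_id]]] tot_0 assms]]) (simp add: e[simplified])
qed

lemma tot_div2: assumes "tot a" shows "tot (\<lambda>n. a n div 2)"
proof -
  have e: "precf (\<lambda>x. 0) (\<lambda>m. pr (pr m) + pl (pr m) mod 2) x k = k div 2" for x k
    by (induction k) (auto simp: div2_Suc_Suc, presburger)
  show ?thesis
    by (rule tot_cong[OF tot_precf[OF tot_0 tot_add[OF tot_snd[OF tot_snd[OF tot_id]] tot_mod2[OF tot_fst[OF tot_snd[OF tot_id]]]] tot_0 assms]]) (simp add: e)
qed

definition dp :: "(nat \<Rightarrow> bool) \<Rightarrow> bool" where
  "dp Q \<longleftrightarrow> tot (\<lambda>n. if Q n then 0 else 1)"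

lemma dp_le: assumes "tot a" "tot b" shows "dp (\<lambda>n. a n \<le> b n)"
  unfolding dp_def
  by (rule tot_cong[OF tot_if0[OF tot_minus[OF assms] tot_0 tot_const]]) auto

lemma dp_eq: assumes "tot a" "tot b" shows "dp (\<lambda>n. a n = b n)"
  unfolding dp_def
  by (rule tot_cong[OF tot_if0[OF tot_add[OF tot_minus[OF assms] tot_minus[OF assms(2,1)]] tot_0 tot_const]]) auto

lemma dp_and: assumes "dp P" "dp Q" shows "dp (\<lambda>n. P n \<and> Q n)"
  using assms unfolding dp_def
  by (rule_tac tot_cong[OF tot_if0[OF assms(1)[unfolded dp_def] assms(2)[unfolded dp_def] tot_const]]) auto

lemma dp_or: assumes "dp P" "dp Q" shows "dp (\<lambda>n. P n \<or> Q n)"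
  using assms unfolding dp_def
  by (rule_tac tot_cong[OF tot_if0[OF assms(1)[unfolded dp_def] tot_0 assms(2)[unfolded dp_def]]]) auto

lemma dp_comp: assumes "dp P" "tot a" shows "dp (\<lambda>n. P (a n))"
  using tot_comp[OF assms(1)[unfolded dp_def] assms(2)] unfolding dp_def by simp

lemma ce_search:
  assumes "dp Q"
  shows "ce_set {n. \<exists>m. Q (prod_encode (n, m))}"
proof -
  obtain r where r: "\<And>n. eval r n (if Q n then 0 else 1)" using assms unfolding dp_def tot_def by blast
  have rQ: "eval r k 0 \<Longrightarrow> Q k" for k
  proof (rule ccontr)
    assume "eval r k 0" "\<not> Q k"
    with r[of k] have "eval r k 1" by simp
    from eval_det[OF \<open>eval r k 0\<close> this] show False by simp
  qed
  have "(\<exists>v. eval (Mu r) n v) \<longleftrightarrow> (\<exists>m. Q (prod_encode (n, m)))" for n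
  proof
    assume "\<exists>v. eval (Mu r) n v"
    then obtain v where "eval (Mu r) n v" by blast
    then have "eval r (prod_encode (n, v)) 0" by (rule evalMuE)
    then show "\<exists>m. Q (prod_encode (n, m))" using rQ by blast
  next
    assume "\<exists>m. Q (prod_encode (n, m))"
    then have ex: "\<exists>m. Q (prod_encode (n, m))" .
    define m where "m = (LEAST m. Q (prod_encode (n, m)))"
    have q: "Q (prod_encode (n, m))" unfolding m_def by (rule LeastI_ex[OF ex])
    have nq: "\<forall>i<m. \<not> Q (prod_encode (n, i))" unfolding m_def using not_less_Least by blast
    have "eval r (prod_encode (n, m)) 0" using r[of "prod_encode (n, m)"] q by simp
    moreover have "\<forall>i<m. \<exists>v. eval r (prod_encode (n, i)) v \<and> v \<noteq> 0"
    proof (intro allI impI)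
      fix i assume "i < m"
      with nq have "\<not> Q (prod_encode (n, i))" by blast
      with r[of "prod_encode (n, i)"] show "\<exists>v. eval r (prod_encode (n, i)) v \<and> v \<noteq> 0" by auto
    qed
    ultimately have "eval (Mu r) n m" by (rule eval_Mu)
    then show "\<exists>v. eval (Mu r) n v" by blast
  qed
  then show ?thesis unfolding ce_set_def by blast
qed

lemma tot_app2: "tot (\<lambda>p. h (pl p) (pr p)) \<Longrightarrow> tot a \<Longrightarrow> tot b \<Longrightarrow> tot (\<lambda>n. h (a n) (b n))"
  using tot_comp[of "\<lambda>p. h (pl p) (pr p)" "\<lambda>n. prod_encode (a n, b n)"] tot_pair by simp

lemmas tot_intros = tot_0 tot_id tot_Suc tot_fst tot_snd tot_pair tot_add tot_minus tot_if0 tot_precf tot_const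

section \<open>Clocked semantics\<close>

definition recstep :: "(nat \<Rightarrow> nat \<Rightarrow> nat) \<Rightarrow> nat \<Rightarrow> nat" where
  "recstep G m = (if pr (pr m) = 0 then 0
      else G (prod_encode (pl (pl m), prod_encode (pl (pr m), pr (pr m) - 1))) (pr (pl m)))"

definition mustep :: "(nat \<Rightarrow> nat \<Rightarrow> nat) \<Rightarrow> nat \<Rightarrow> nat" where
  "mustep F m = (if pr (pr m) = 0 then
       (if F (prod_encode (pl (pl m), pl (pr m))) (pr (pl m)) = 0 then 1
        else if F (prod_encode (pl (pl m), pl (pr m))) (pr (pl m)) - 1 = 0 then Suc (Suc (pl (pr m)))
        else 0)
     else pr (pr m))"

primrec cl :: "recf \<Rightarrow> nat \<Rightarrow> nat \<Rightarrow> nat" where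
  "cl Z n t = 1"
| "cl S n t = Suc (Suc n)"
| "cl Fst n t = Suc (pl n)"
| "cl Snd n t = Suc (pr n)"
| "cl (Comp f g) n t = (if cl g n t = 0 then 0 else cl f (cl g n t - 1) t)"
| "cl (recf.Pair f g) n t = (if cl f n t = 0 then 0 else if cl g n t = 0 then 0
      else Suc (prod_encode (cl f n t - 1, cl g n t - 1)))"
| "cl (Rec f g) n t = precf (\<lambda>X. cl f (pl X) (pr X)) (recstep (cl g)) (prod_encode (pl n, t)) (pr n)"
| "cl (Mu f) n t = precf (\<lambda>X. 0) (mustep (cl f)) (prod_encode (n, t)) t - 1"

lemma tot_cl: "tot (\<lambda>p. cl f (pl p) (pr p))"
proof (induction f)
  case (Comp f g)
  show ?case by (simp only: cl.simps) (intro tot_intros tot_app2[OF Comp(1)] tot_app2[OF Comp(2)])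
next
  case (Pair f g)
  show ?case by (simp only: cl.simps) (intro tot_intros tot_app2[OF Pair(1)] tot_app2[OF Pair(2)])
next
  case (Rec f g)
  show ?case unfolding cl.simps recstep_def
    by (intro tot_intros tot_app2[OF Rec(1)] tot_app2[OF Rec(2)])
next
  case (Mu f)
  show ?case unfolding cl.simps mustep_def
    by (intro tot_intros tot_app2[OF Mu])
qed (simp only: cl.simps; intro tot_intros)+




lemma recstep_app: "recstep G (prod_encode (X, prod_encode (i, s))) =
   (if s = 0 then 0 else G (prod_encode (pl X, prod_encode (i, s - 1))) (pr X))"
  by (simp add: recstep_def)

lemma mustep_app: "mustep F (prod_encode (X, prod_encode (j, s))) =
   (if s = 0 then
       (if F (prod_encode (pl X, j)) (pr X) = 0 then 1
        else if F (prod_encode (pl X, j)) (pr X) = 1 then Suc (Suc j)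
        else 0)
     else s)"
  by (auto simp: mustep_def)

lemma rec_sound:
  assumes IHf: "\<And>n t v. cl f n t = Suc v \<Longrightarrow> eval f n v"
    and IHg: "\<And>n t v. cl g n t = Suc v \<Longrightarrow> eval g n v"
  shows "precf (\<lambda>X. cl f (pl X) (pr X)) (recstep (cl g)) (prod_encode (x, t)) k = Suc v
         \<Longrightarrow> eval (Rec f g) (prod_encode (x, k)) v"
proof (induction k arbitrary: v)
  case 0
  then show ?case by (auto intro: eval_Rec0 IHf)
next
  case (Suc k)
  let ?s = "precf (\<lambda>X. cl f (pl X) (pr X)) (recstep (cl g)) (prod_encode (x, t)) k"
  from Suc.prems have nz: "?s \<noteq> 0" by (auto simp: recstep_app split: if_splits)
  then obtain u where u: "?s = Suc u" by (cases ?s) auto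
  from Suc.prems u have "cl g (prod_encode (x, prod_encode (k, u))) t = Suc v"
    by (simp add: recstep_app)
  with Suc.IH[OF u] show ?case by (auto intro: eval_RecS IHg)
qed

abbreviation M where "M F n t J \<equiv> precf (\<lambda>X. 0) (mustep F) (prod_encode (n, t)) J"

lemma mu_inv:
  "(M F n t J = 0 \<longrightarrow> (\<forall>i<J. F (prod_encode (n, i)) t \<ge> 2)) \<and>
   (\<forall>j. M F n t J = Suc (Suc j) \<longrightarrow> j < J \<and> F (prod_encode (n, j)) t = 1 \<and> (\<forall>i<j. F (prod_encode (n, i)) t \<ge> 2))"
proof (induction J)
  case 0 then show ?case by simp
next
  case (Suc J)
  show ?case
  proof (cases "M F n t J = 0")
    case True
    with Suc show ?thesis
      by (auto simp: mustep_app less_Suc_eq split: if_splits)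
  next
    case False
    with Suc show ?thesis
      by (auto simp: mustep_app less_Suc_eq split: if_splits)
  qed
qed

lemma mu_found:
  assumes "F (prod_encode (n, j)) t = 1" "\<forall>i<j. F (prod_encode (n, i)) t \<ge> 2"
  shows "M F n t J = (if J \<le> j then 0 else Suc (Suc j))"
proof (induction J)
  case 0 then show ?case by simp
next
  case (Suc J)
  show ?case
  proof (cases "Suc J \<le> j")
    case True
    then have "F (prod_encode (n, J)) t \<ge> 2" using assms(2) by auto
    with Suc True show ?thesis by (simp add: mustep_app)
  next
    case False
    show ?thesis
    proof (cases "J = j")
      case True
      with Suc False assms(1) show ?thesis by (simp add: mustep_app)
    next
      case F2: False
      with False have "j < J" by simp
      with Suc False show ?thesis by (simp add: mustep_app)
    qed
  qed
qed

lemma cl_sound: "cl f n t = Suc v \<Longrightarrow> eval f n v"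
proof (induction f arbitrary: n t v)
  case Z then show ?case by (auto intro: eval_Z)
next
  case S then show ?case by (auto intro: eval_S)
next
  case Fst then show ?case by (auto intro: eval_Fst)
next
  case Snd then show ?case by (auto intro: eval_Snd)
next
  case (Comp f g)
  then obtain m where m: "cl g n t = Suc m" by (cases "cl g n t") (auto split: if_splits)
  with Comp.prems have "cl f m t = Suc v" by simp
  from eval_Comp[OF Comp.IH(2)[OF m] Comp.IH(1)[OF this]] show ?case .
next
  case (Pair f g)
  then obtain a b where a: "cl f n t = Suc a" and b: "cl g n t = Suc b"
    by (cases "cl f n t"; cases "cl g n t") (auto split: if_splits)
  with Pair.prems have "v = prod_encode (a, b)" by simp
  with eval_Pair[OF Pair.IH(1)[OF a] Pair.IH(2)[OF b]] show ?case by simp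
next
  case (Rec f g)
  have "eval (Rec f g) (prod_encode (pl n, pr n)) v"
    using Rec.prems by (intro rec_sound[OF Rec.IH]) simp_all
  then show ?case by simp
next
  case (Mu f)
  from Mu.prems have e: "M (cl f) n t t = Suc (Suc v)" by simp
  with mu_inv[of "cl f" n t t] have h: "cl f (prod_encode (n, v)) t = 1"
    "\<forall>i<v. cl f (prod_encode (n, i)) t \<ge> 2" by auto
  show ?case
  proof (rule eval_Mu)
    show "eval f (prod_encode (n, v)) 0" using h(1) Mu.IH by simp
    show "\<forall>i<v. \<exists>w. eval f (prod_encode (n, i)) w \<and> w \<noteq> 0"
    proof (intro allI impI)
      fix i assume "i < v"
      with h(2) have "cl f (prod_encode (n, i)) t \<ge> 2" by auto
      then obtain w where "cl f (prod_encode (n, i)) t = Suc (Suc w)"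
        by (metis add_2_eq_Suc le_Suc_ex)
      with Mu.IH show "\<exists>w. eval f (prod_encode (n, i)) w \<and> w \<noteq> 0" by blast
    qed
  qed
qed

lemma finite_choice_T:
  "(\<forall>i<(m::nat). \<exists>T::nat. \<forall>t\<ge>T. P i t) \<Longrightarrow> \<exists>T. \<forall>i<m. \<forall>t\<ge>T. P i t"
proof (induction m)
  case 0 then show ?case by simp
next
  case (Suc m)
  then obtain T1 where T1: "\<forall>i<m. \<forall>t\<ge>T1. P i t" by auto
  from Suc.prems obtain T2 where T2: "\<forall>t\<ge>T2. P m t" by auto
  show ?case by (rule exI[of _ "max T1 T2"]) (use T1 T2 less_Suc_eq in auto)
qed

lemma cl_complete: "eval f n v \<Longrightarrow> \<exists>T. \<forall>t\<ge>T. cl f n t = Suc v"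
proof (induction rule: eval.induct)
  case (eval_Comp g n m f k)
  then obtain T1 T2 where "\<forall>t\<ge>T1. cl g n t = Suc m" "\<forall>t\<ge>T2. cl f m t = Suc k" by blast
  then show ?case by (intro exI[of _ "max T1 T2"]) auto
next
  case (eval_Pair f n a g b)
  then obtain T1 T2 where "\<forall>t\<ge>T1. cl f n t = Suc a" "\<forall>t\<ge>T2. cl g n t = Suc b" by blast
  then show ?case by (intro exI[of _ "max T1 T2"]) auto
next
  case (eval_Rec0 f x v g)
  then show ?case by simp
next
  case (eval_RecS f g x k u v)
  then obtain T1 T2 where T1: "\<forall>t\<ge>T1. cl (Rec f g) (prod_encode (x, k)) t = Suc u"
    and T2: "\<forall>t\<ge>T2. cl g (prod_encode (x, prod_encode (k, u))) t = Suc v" by blast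
  show ?case
  proof (intro exI[of _ "max T1 T2"] allI impI)
    fix t assume "max T1 T2 \<le> t"
    with T1 T2 show "cl (Rec f g) (prod_encode (x, Suc k)) t = Suc v"
      by (auto simp: recstep_app)
  qed
next
  case (eval_Mu f n m)
  from eval_Mu.IH(1) obtain T1 where T1: "\<forall>t\<ge>T1. cl f (prod_encode (n, m)) t = 1" by auto
  have "\<forall>i<m. \<exists>T. \<forall>t\<ge>T. cl f (prod_encode (n, i)) t \<ge> 2"
  proof (intro allI impI)
    fix i assume "i < m"
    with eval_Mu.IH(2) obtain w T where "w \<noteq> 0" "\<forall>t\<ge>T. cl f (prod_encode (n, i)) t = Suc w" by blast
    then show "\<exists>T. \<forall>t\<ge>T. cl f (prod_encode (n, i)) t \<ge> 2" by (intro exI[of _ T]) auto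
  qed
  from finite_choice_T[OF this] obtain T2 where T2: "\<forall>i<m. \<forall>t\<ge>T2. cl f (prod_encode (n, i)) t \<ge> 2" by blast
  show ?case
  proof (intro exI[of _ "max (max T1 T2) (Suc m)"] allI impI)
    fix t assume t: "max (max T1 T2) (Suc m) \<le> t"
    have "M (cl f) n t t = (if t \<le> m then 0 else Suc (Suc m))"
      by (rule mu_found) (use T1 T2 t in auto)
    with t show "cl (Mu f) n t = Suc m" by simp
  qed
qed simp_all

lemma eval_iff_cl: "eval f n v \<longleftrightarrow> (\<exists>t. cl f n t = Suc v)"
  using cl_sound cl_complete by blast




lemma pc_eval: "(\<forall>x v. eval r (enc x) v \<longleftrightarrow> (\<exists>z. U x = Some z \<and> v = enc z))
   \<Longrightarrow> eval r p v \<longleftrightarrow> (\<exists>z. U (dec p) = Some z \<and> v = enc z)"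
  by (metis enc_dec)

lemma tot_eval: "tot h \<Longrightarrow> \<exists>r. \<forall>n v. eval r n v \<longleftrightarrow> v = h n"
  unfolding tot_def using eval_det by blast

lemma pc_code_comp:
  assumes "partial_computable U" "tot h"
  shows "partial_computable (\<lambda>w. U (dec (h (enc w))))"
proof -
  obtain r where r: "\<forall>x v. eval r (enc x) v \<longleftrightarrow> (\<exists>z. U x = Some z \<and> v = enc z)"
    using assms(1) unfolding partial_computable_def by blast
  obtain rh where rh: "\<And>n v. eval rh n v \<longleftrightarrow> v = h n" using tot_eval[OF assms(2)] by blast
  have "eval (Comp r rh) (enc w) v \<longleftrightarrow> eval r (h (enc w)) v" for w v
  proof
    assume "eval (Comp r rh) (enc w) v"
    then show "eval r (h (enc w)) v" by (rule evalCompE) (use rh in simp)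
  next
    assume "eval r (h (enc w)) v"
    then show "eval (Comp r rh) (enc w) v" by (intro eval_Comp[of rh _ "h (enc w)"]) (simp_all add: rh)
  qed
  then show ?thesis unfolding partial_computable_def using pc_eval[OF r] by metis
qed

lemma pc_code:
  assumes "tot h"
  shows "partial_computable (\<lambda>w. Some (dec (h (enc w))))"
proof -
  obtain rh where rh: "\<And>n v. eval rh n v \<longleftrightarrow> v = h n" using tot_eval[OF assms] by blast
  show ?thesis unfolding partial_computable_def by (rule exI[of _ rh]) (simp add: rh)
qed

lemma pc_compose:
  assumes "partial_computable U" "partial_computable f"
  shows "partial_computable (\<lambda>w. case U w of None \<Rightarrow> None | Some x \<Rightarrow> f x)"
proof -
  obtain r where r: "\<forall>x v. eval r (enc x) v \<longleftrightarrow> (\<exists>z. U x = Some z \<and> v = enc z)"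
    using assms(1) unfolding partial_computable_def by blast
  obtain rf where rf: "\<forall>x v. eval rf (enc x) v \<longleftrightarrow> (\<exists>z. f x = Some z \<and> v = enc z)"
    using assms(2) unfolding partial_computable_def by blast
  have "eval (Comp rf r) (enc w) v \<longleftrightarrow> (\<exists>z. (case U w of None \<Rightarrow> None | Some x \<Rightarrow> f x) = Some z \<and> v = enc z)" for w v
  proof
    assume "eval (Comp rf r) (enc w) v"
    then obtain m where "eval r (enc w) m" "eval rf m v" by (rule evalCompE)
    with r rf show "\<exists>z. (case U w of None \<Rightarrow> None | Some x \<Rightarrow> f x) = Some z \<and> v = enc z" by auto
  next
    assume "\<exists>z. (case U w of None \<Rightarrow> None | Some x \<Rightarrow> f x) = Some z \<and> v = enc z"
    then obtain x z where "U w = Some x" "f x = Some z" "v = enc z" by (auto split: option.splits)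
    with r rf show "eval (Comp rf r) (enc w) v" by (intro eval_Comp[of r _ "enc x"]) auto
  qed
  then show ?thesis unfolding partial_computable_def by blast
qed

lemma Ccond_le: "T (str_pair z y) = Some x \<Longrightarrow> Ccond T x y \<le> enat (length z)"
  unfolding Ccond_def by (rule INF_lower2[of z]) auto

lemma Ccond_le_E:
  assumes "Ccond T x y \<le> enat j"
  shows "\<exists>z. length z \<le> j \<and> T (str_pair z y) = Some x"
proof -
  let ?S = "{z. T (str_pair z y) = Some x}"
  have ne: "?S \<noteq> {}"
  proof
    assume "?S = {}"
    then have "Ccond T x y = \<infinity>" unfolding Ccond_def by (simp add: top_enat_def)
    with assms show False by simp
  qed
  have "Ccond T x y = Inf ((\<lambda>z. enat (length z)) ` ?S)" unfolding Ccond_def by simp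
  also have "\<dots> \<in> (\<lambda>z. enat (length z)) ` ?S"
    unfolding Inf_enat_def using ne by (auto intro: LeastI)
  finally obtain z where "z \<in> ?S" "Ccond T x y = enat (length z)" by blast
  with assms show ?thesis by auto
qed

context
  fixes U :: "str \<Rightarrow> str option"
  assumes opt: "optimal_machine U"
begin

lemma pcU: "partial_computable U" using opt unfolding optimal_machine_def by blast

lemma machine_bound:
  assumes "partial_computable T"
  shows "\<exists>c. \<forall>x y z. T (str_pair z y) = Some x \<longrightarrow> Ccond U x y \<le> enat (length z + c)"
proof -
  obtain c where c: "\<forall>x y. Ccond U x y \<le> Ccond T x y + enat c"
    using opt assms unfolding optimal_machine_def by blast
  show ?thesis
  proof (intro exI[of _ c] allI impI)
    fix x y z assume "T (str_pair z y) = Some x"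
    then have "Ccond T x y + enat c \<le> enat (length z) + enat c" by (intro add_right_mono Ccond_le)
    with c show "Ccond U x y \<le> enat (length z + c)" by (metis order_trans plus_enat_simps(1))
  qed
qed

definition Cn :: "str \<Rightarrow> str \<Rightarrow> nat" where "Cn x y = the_enat (Ccond U x y)"

lemma T0: "\<exists>c0. \<forall>x y. Ccond U x y \<le> enat (length x + c0)"
proof -
  have "partial_computable (\<lambda>w. Some (dec (pl (enc w))))" by (intro pc_code tot_intros)
  from machine_bound[OF this] obtain c where
    c: "\<forall>x y z. Some (dec (pl (enc (str_pair z y)))) = Some x \<longrightarrow> Ccond U x y \<le> enat (length z + c)" by blast
  show ?thesis by (rule exI[of _ c]) (use c in simp)
qed

lemma Ccond_fin: "Ccond U x y = enat (Cn x y)"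
proof -
  obtain c0 where "\<forall>x y. Ccond U x y \<le> enat (length x + c0)" using T0 by blast
  then have "Ccond U x y \<noteq> \<infinity>" by (metis enat_ord_simps(5) infinity_ileE)
  then show ?thesis unfolding Cn_def by auto
qed

lemma Cn_len: "\<exists>c0. \<forall>x y. Cn x y \<le> length x + c0"
proof -
  obtain c0 where c0: "\<forall>x y. Ccond U x y \<le> enat (length x + c0)" using T0 by blast
  have "Cn x y \<le> length x + c0" for x y
  proof -
    have "Ccond U x y \<le> enat (length x + c0)" using c0 by blast
    then have "enat (Cn x y) \<le> enat (length x + c0)" by (simp only: Ccond_fin)
    then show ?thesis by (simp only: enat_ord_simps)
  qed
  then show ?thesis by blast
qed

lemma Cn_le_iff: "Cn x y \<le> j \<longleftrightarrow> (\<exists>z. length z \<le> j \<and> U (str_pair z y) = Some x)"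
proof
  assume "Cn x y \<le> j"
  then have "Ccond U x y \<le> enat j" by (simp only: Ccond_fin enat_ord_simps)
  then show "\<exists>z. length z \<le> j \<and> U (str_pair z y) = Some x" by (rule Ccond_le_E)
next
  assume "\<exists>z. length z \<le> j \<and> U (str_pair z y) = Some x"
  then obtain z where "length z \<le> j" "U (str_pair z y) = Some x" by blast
  then have "Ccond U x y \<le> enat (length z)" by (intro Ccond_le)
  also have "\<dots> \<le> enat j" using \<open>length z \<le> j\<close> by simp
  finally have "Ccond U x y \<le> enat j" .
  then show "Cn x y \<le> j" by (simp only: Ccond_fin enat_ord_simps)
qed

lemma Cn_witness: "\<exists>z. length z = Cn x y \<and> U (str_pair z y) = Some x"
proof -
  obtain z where z: "length z \<le> Cn x y" "U (str_pair z y) = Some x" using Cn_le_iff by blast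
  then have "Cn x y \<le> length z" using Cn_le_iff by blast
  with z show ?thesis by (intro exI[of _ z]) auto
qed

lemma machine_Cn:
  assumes "partial_computable T"
  shows "\<exists>c. \<forall>x y z. T (str_pair z y) = Some x \<longrightarrow> Cn x y \<le> length z + c"
proof -
  obtain c where c: "\<forall>x y z. T (str_pair z y) = Some x \<longrightarrow> Ccond U x y \<le> enat (length z + c)"
    using machine_bound[OF assms] by blast
  have "Cn x y \<le> length z + c" if "T (str_pair z y) = Some x" for x y z
  proof -
    have "Ccond U x y \<le> enat (length z + c)" using c that by blast
    then have "enat (Cn x y) \<le> enat (length z + c)" by (simp only: Ccond_fin)
    then show ?thesis by (simp only: enat_ord_simps)
  qed
  then show ?thesis by blast
qed

end




lemma discrete_ivt:
  fixes g :: "nat \<Rightarrow> nat"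
  assumes "g 0 < N" "N \<le> g L" "\<forall>i<L. g (Suc i) \<le> g i + D"
  shows "\<exists>i\<le>L. N \<le> g i \<and> g i \<le> N + D"
proof -
  define i where "i = (LEAST i. N \<le> g i)"
  have gi: "N \<le> g i" unfolding i_def by (rule LeastI[of _ L]) (rule assms(2))
  have iL: "i \<le> L" unfolding i_def by (rule Least_le) (rule assms(2))
  have "i \<noteq> 0"
  proof
    assume "i = 0" with gi assms(1) show False by simp
  qed
  then obtain i' where i': "i = Suc i'" by (cases i) auto
  have "\<not> N \<le> g i'" unfolding i_def using i' not_less_Least[of i' "\<lambda>i. N \<le> g i"] i_def by simp
  moreover have "g i \<le> g i' + D" using assms(3) i' iL by simp
  ultimately show ?thesis using gi iL by (intro exI[of _ i]) auto
qed

lemma card_len_le: "finite {z::str. length z \<le> L} \<and> card {z::str. length z \<le> L} \<le> 2 ^ (L + 1)"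
proof -
  have sub: "{z::str. length z \<le> L} \<subseteq> dec ` {..<2 ^ (L + 1)}"
  proof
    fix z :: str assume "z \<in> {z. length z \<le> L}"
    then have "enc z + 2 \<le> 2 ^ (L + 1)" using len_le_iff by blast
    then have "enc z \<in> {..<2 ^ (L + 1)}" by simp
    then show "z \<in> dec ` {..<2 ^ (L + 1)}" by (metis dec_enc image_eqI)
  qed
  have "card (dec ` {..<(2::nat) ^ (L + 1)}) \<le> 2 ^ (L + 1)"
    using card_image_le[of "{..<(2::nat) ^ (L + 1)}" dec] by simp
  with sub show ?thesis by (meson card_mono finite_imageI finite_lessThan finite_subset order_trans)
qed

context
  fixes U :: "str \<Rightarrow> str option"
  assumes opt: "optimal_machine U"
begin

abbreviation C where "C \<equiv> Cn U"

definition B :: "str \<Rightarrow> str \<Rightarrow> nat" where "B x y = min (C x []) (2 * C x y)"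

lemma CE: "\<exists>c. \<forall>x y. C x y \<le> C x [] + c"
proof -
  have "partial_computable (\<lambda>w. U (dec (prod_encode (pl (enc w), 0))))"
    by (intro pc_code_comp pcU[OF opt] tot_intros)
  from machine_Cn[OF opt this] obtain c where
    c: "\<forall>x y z. U (dec (prod_encode (pl (enc (str_pair z y)), 0))) = Some x \<longrightarrow> C x y \<le> length z + c" by blast
  show ?thesis
  proof (intro exI[of _ c] allI)
    fix x y
    obtain z where z: "length z = C x []" "U (str_pair z []) = Some x" using Cn_witness[OF opt] by blast
    then have "U (dec (prod_encode (pl (enc (str_pair z y)), 0))) = Some x" by (simp add: str_pair_def)
    with c z show "C x y \<le> C x [] + c" by metis
  qed
qed

lemma Cself: "\<exists>c. \<forall>x. C x x \<le> c"
proof -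
  have "partial_computable (\<lambda>w. Some (dec (pr (enc w))))" by (intro pc_code tot_intros)
  from machine_Cn[OF opt this] obtain c where
    c: "\<forall>x y z. Some (dec (pr (enc (str_pair z y)))) = Some x \<longrightarrow> C x y \<le> length z + c" by blast
  show ?thesis
  proof (intro exI[of _ c] allI)
    fix x
    have "Some (dec (pr (enc (str_pair [] x)))) = Some x" by simp
    with c show "C x x \<le> c" by (metis list.size(3) add_0)
  qed
qed

lemma Cf:
  assumes "partial_computable f"
  shows "\<exists>c. \<forall>x y z. f x = Some z \<longrightarrow> C z y \<le> C x y + c"
proof -
  have "partial_computable (\<lambda>w. case U w of None \<Rightarrow> None | Some x \<Rightarrow> f x)"
    by (rule pc_compose[OF pcU[OF opt] assms])
  from machine_Cn[OF opt this] obtain c where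
    c: "\<forall>x y z. (case U (str_pair z y) of None \<Rightarrow> None | Some x \<Rightarrow> f x) = Some x \<longrightarrow> C x y \<le> length z + c" by blast
  show ?thesis
  proof (intro exI[of _ c] allI impI)
    fix x y z assume fx: "f x = Some z"
    obtain p where p: "length p = C x y" "U (str_pair p y) = Some x" using Cn_witness[OF opt] by blast
    with fx have "(case U (str_pair p y) of None \<Rightarrow> None | Some x \<Rightarrow> f x) = Some z" by simp
    with c p show "C z y \<le> C x y + c" by metis
  qed
qed

lemma Cstep: "\<exists>c. \<forall>x y b. C x y \<le> C x (b # y) + c"
proof -
  let ?h = "\<lambda>n. prod_encode ((pl n - 1) div 2, (pr n + pr n + 2) - pl n mod 2)"
  have "partial_computable (\<lambda>w. U (dec (?h (enc w))))"
    by (intro pc_code_comp pcU[OF opt] tot_intros tot_div2 tot_mod2)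
  from machine_Cn[OF opt this] obtain c where
    c: "\<forall>x y z. U (dec (?h (enc (str_pair z y)))) = Some x \<longrightarrow> C x y \<le> length z + c" by blast
  show ?thesis
  proof (intro exI[of _ "c + 1"] allI)
    fix x y b
    obtain p where p: "length p = C x (b # y)" "U (str_pair p (b # y)) = Some x" using Cn_witness[OF opt] by blast
    have "?h (enc (str_pair (b # p) y)) = enc (str_pair p (b # y))"
      by simp
    then have "U (dec (?h (enc (str_pair (b # p) y)))) = Some x" using p(2) by (simp add: str_pair_def)
    with c have "C x y \<le> length (b # p) + c" by blast
    with p show "C x y \<le> C x (b # y) + (c + 1)" by simp
  qed
qed

lemma incompressible: "\<exists>x. C x [] \<ge> N"
proof -
  have "{x. C x [] < N} \<subseteq> (\<lambda>z. the (U (str_pair z []))) ` {z. length z \<le> N}"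
  proof
    fix x assume "x \<in> {x. C x [] < N}"
    then have "C x [] \<le> N" by simp
    then obtain z where "length z \<le> N" "U (str_pair z []) = Some x" using Cn_le_iff[OF opt] by blast
    then show "x \<in> (\<lambda>z. the (U (str_pair z []))) ` {z. length z \<le> N}" by force
  qed
  then have "finite {x. C x [] < N}" using card_len_le finite_surj by blast
  moreover have "infinite (UNIV :: str set)" by (rule infinite_UNIV_listI)
  ultimately obtain x where "x \<notin> {x. C x [] < N}" by (metis UNIV_I ex_new_if_finite)
  then have "N \<le> C x []" by simp
  then show ?thesis by blast
qed

end




context
  fixes U :: "str \<Rightarrow> str option"
  assumes opt: "optimal_machine U"
begin

lemma C_le_code:
  assumes r: "\<forall>x v. eval r (enc x) v \<longleftrightarrow> (\<exists>z. U x = Some z \<and> v = enc z)"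
  shows "C U x w \<le> j \<longleftrightarrow> (\<exists>zc t. zc + 2 \<le> 2 ^ (j + 1) \<and> cl r (prod_encode (zc, enc w)) t = Suc (enc x))"
proof -
  have ev: "(\<exists>t. cl r (prod_encode (enc z, enc w)) t = Suc (enc x)) \<longleftrightarrow> U (str_pair z w) = Some x" for z
  proof -
    have "(\<exists>t. cl r (prod_encode (enc z, enc w)) t = Suc (enc x)) \<longleftrightarrow> eval r (prod_encode (enc z, enc w)) (enc x)"
      using eval_iff_cl by blast
    also have "\<dots> \<longleftrightarrow> eval r (enc (str_pair z w)) (enc x)" by simp
    also have "\<dots> \<longleftrightarrow> U (str_pair z w) = Some x"
      using r[rule_format, of "str_pair z w" "enc x"] by (auto simp del: enc_str_pair)
    finally show ?thesis .
  qed
  have "C U x w \<le> j \<longleftrightarrow> (\<exists>z. length z \<le> j \<and> U (str_pair z w) = Some x)" by (rule Cn_le_iff[OF opt])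
  also have "\<dots> \<longleftrightarrow> (\<exists>z t. enc z + 2 \<le> 2 ^ (j + 1) \<and> cl r (prod_encode (enc z, enc w)) t = Suc (enc x))"
    using ev len_le_iff by blast
  also have "\<dots> \<longleftrightarrow> (\<exists>zc t. zc + 2 \<le> 2 ^ (j + 1) \<and> cl r (prod_encode (zc, enc w)) t = Suc (enc x))"
    by (metis enc_dec)
  finally show ?thesis .
qed

lemma usc: "upper_semicomputable (B U)"
proof -
  obtain r where r: "\<forall>x v. eval r (enc x) v \<longleftrightarrow> (\<exists>z. U x = Some z \<and> v = enc z)"
    using pcU[OF opt] unfolding partial_computable_def by blast
  define Q where "Q p \<longleftrightarrow>
     (pr (pr (pr p)) \<le> pr (pr (pl p)) \<and> pl (pr p) + 2 \<le> 2 ^ (pr (pr (pr p)) + 1) \<and>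
        cl r (prod_encode (pl (pr p), 0)) (pl (pr (pr p))) = Suc (pl (pl p))) \<or>
     (pr (pr (pr p)) + pr (pr (pr p)) \<le> pr (pr (pl p)) \<and> pl (pr p) + 2 \<le> 2 ^ (pr (pr (pr p)) + 1) \<and>
        cl r (prod_encode (pl (pr p), pl (pr (pl p)))) (pl (pr (pr p))) = Suc (pl (pl p)))" for p
  have dpQ: "dp Q" unfolding Q_def
    by (intro dp_or dp_and dp_le dp_eq tot_intros tot_pow2 tot_app2[OF tot_cl])
  let ?S = "{prod_encode (enc x, prod_encode (enc y, k)) | x y k. B U x y \<le> k}"
  have mem: "n \<in> ?S \<longleftrightarrow> B U (dec (pl n)) (dec (pl (pr n))) \<le> pr (pr n)" for n
  proof
    assume "n \<in> ?S"
    then show "B U (dec (pl n)) (dec (pl (pr n))) \<le> pr (pr n)" by auto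
  next
    assume h: "B U (dec (pl n)) (dec (pl (pr n))) \<le> pr (pr n)"
    have "n = prod_encode (enc (dec (pl n)), prod_encode (enc (dec (pl (pr n))), pr (pr n)))" by simp
    with h show "n \<in> ?S" by blast
  qed
  have key: "B U x y \<le> k \<longleftrightarrow> (\<exists>zc t j.
     (j \<le> k \<and> zc + 2 \<le> 2 ^ (j + 1) \<and> cl r (prod_encode (zc, 0)) t = Suc (enc x)) \<or>
     (j + j \<le> k \<and> zc + 2 \<le> 2 ^ (j + 1) \<and> cl r (prod_encode (zc, enc y)) t = Suc (enc x)))" for x y k
  proof -
    have "B U x y \<le> k \<longleftrightarrow> C U x [] \<le> k \<or> C U x y + C U x y \<le> k"
      unfolding B_def[OF opt] by auto
    also have "\<dots> \<longleftrightarrow> (\<exists>j. j \<le> k \<and> C U x [] \<le> j) \<or> (\<exists>j. j + j \<le> k \<and> C U x y \<le> j)"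
      by (meson add_mono order_refl order_trans)
    also have "\<dots> \<longleftrightarrow> (\<exists>zc t j.
     (j \<le> k \<and> zc + 2 \<le> 2 ^ (j + 1) \<and> cl r (prod_encode (zc, 0)) t = Suc (enc x)) \<or>
     (j + j \<le> k \<and> zc + 2 \<le> 2 ^ (j + 1) \<and> cl r (prod_encode (zc, enc y)) t = Suc (enc x)))"
      using C_le_code[OF r, of x "[]"] C_le_code[OF r, of x y] by auto
    finally show ?thesis .
  qed
  have "n \<in> ?S \<longleftrightarrow> (\<exists>m. Q (prod_encode (n, m)))" for n
  proof -
    have "n \<in> ?S \<longleftrightarrow> (\<exists>zc t j.
     (j \<le> pr (pr n) \<and> zc + 2 \<le> 2 ^ (j + 1) \<and> cl r (prod_encode (zc, 0)) t = Suc (pl n)) \<or>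
     (j + j \<le> pr (pr n) \<and> zc + 2 \<le> 2 ^ (j + 1) \<and> cl r (prod_encode (zc, pl (pr n))) t = Suc (pl n)))"
      using mem[of n] key[of "dec (pl n)" "dec (pl (pr n))" "pr (pr n)"] by (simp only: enc_dec)
    also have "\<dots> \<longleftrightarrow> (\<exists>m. Q (prod_encode (n, m)))"
    proof
      assume "\<exists>zc t j.
     (j \<le> pr (pr n) \<and> zc + 2 \<le> 2 ^ (j + 1) \<and> cl r (prod_encode (zc, 0)) t = Suc (pl n)) \<or>
     (j + j \<le> pr (pr n) \<and> zc + 2 \<le> 2 ^ (j + 1) \<and> cl r (prod_encode (zc, pl (pr n))) t = Suc (pl n))"
      then obtain zc t j where "(j \<le> pr (pr n) \<and> zc + 2 \<le> 2 ^ (j + 1) \<and> cl r (prod_encode (zc, 0)) t = Suc (pl n)) \<or>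
     (j + j \<le> pr (pr n) \<and> zc + 2 \<le> 2 ^ (j + 1) \<and> cl r (prod_encode (zc, pl (pr n))) t = Suc (pl n))" by blast
      then have "Q (prod_encode (n, prod_encode (zc, prod_encode (t, j))))" unfolding Q_def by simp
      then show "\<exists>m. Q (prod_encode (n, m))" by blast
    next
      assume "\<exists>m. Q (prod_encode (n, m))"
      then obtain m where "Q (prod_encode (n, m))" by blast
      then show "\<exists>zc t j.
     (j \<le> pr (pr n) \<and> zc + 2 \<le> 2 ^ (j + 1) \<and> cl r (prod_encode (zc, 0)) t = Suc (pl n)) \<or>
     (j + j \<le> pr (pr n) \<and> zc + 2 \<le> 2 ^ (j + 1) \<and> cl r (prod_encode (zc, pl (pr n))) t = Suc (pl n))"
        unfolding Q_def by auto
    qed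
    finally show ?thesis .
  qed
  then have "?S = {n. \<exists>m. Q (prod_encode (n, m))}" by blast
  with ce_search[OF dpQ] show ?thesis unfolding upper_semicomputable_def by simp
qed

end




theorem theorem6:
  fixes U :: "str \<Rightarrow> str option"
  assumes "optimal_machine U"
  shows "\<exists>B :: str \<Rightarrow> str \<Rightarrow> nat.
     upper_semicomputable B
   \<and> (\<exists>c::nat. \<forall>x y. B x y \<le> length x + c)
   \<and> (\<exists>d::nat. \<forall>y n. finite {x. B x y \<le> n} \<and> card {x. B x y \<le> n} \<le> d * 2 ^ n)
   \<and> (\<forall>f. partial_computable f \<longrightarrow>
         (\<exists>cf::nat. \<forall>y x z. f x = Some z \<longrightarrow> B z y \<le> B x y + cf))
   \<and> (\<exists>e::nat. \<forall>x. B x x \<le> e)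
   \<and> (\<forall>m::nat. \<exists>x y. enat (B x y) + enat m < Ccond U x y
                     \<or> Ccond U x y + enat m < enat (B x y))"
proof (intro exI[of _ "B U"] conjI)
  note opt = assms
  note Bd = B_def[OF opt]
  show "upper_semicomputable (B U)" by (rule usc[OF opt])
  show "\<exists>c::nat. \<forall>x y. B U x y \<le> length x + c"
  proof -
    obtain c0 where c0: "\<forall>x y. C U x y \<le> length x + c0" using Cn_len[OF opt] by blast
    have "B U x y \<le> length x + c0" for x y using c0[rule_format, of x "[]"] unfolding Bd by simp
    then show ?thesis by blast
  qed
  show "\<exists>d::nat. \<forall>y n. finite {x. B U x y \<le> n} \<and> card {x. B U x y \<le> n} \<le> d * 2 ^ n"
  proof -
    obtain cE where cE: "\<forall>x y. C U x y \<le> C U x [] + cE" using CE[OF opt] by blast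
    have "finite {x. B U x y \<le> n} \<and> card {x. B U x y \<le> n} \<le> 2 ^ (cE + 1) * 2 ^ n" for y n
    proof -
      let ?F = "\<lambda>z. the (U (str_pair z y))"
      have sub: "{x. B U x y \<le> n} \<subseteq> ?F ` {z. length z \<le> n + cE}"
      proof
        fix x assume "x \<in> {x. B U x y \<le> n}"
        then have "C U x [] \<le> n \<or> 2 * C U x y \<le> n" unfolding Bd by auto
        then have "C U x y \<le> n + cE" using cE[rule_format, of x y] by auto
        then obtain z where "length z \<le> n + cE" "U (str_pair z y) = Some x" using Cn_le_iff[OF opt] by blast
        then show "x \<in> ?F ` {z. length z \<le> n + cE}" by force
      qed
      have fz: "finite {z::str. length z \<le> n + cE}" and cz: "card {z::str. length z \<le> n + cE} \<le> 2 ^ (n + cE + 1)"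
        using card_len_le by blast+
      have "card (?F ` {z. length z \<le> n + cE}) \<le> 2 ^ (n + cE + 1)"
        using card_image_le[OF fz, of ?F] cz by linarith
      moreover have "(2::nat) ^ (n + cE + 1) = 2 ^ (cE + 1) * 2 ^ n" by (simp add: power_add)
      ultimately show ?thesis using sub fz
        by (metis (no_types, lifting) card_mono finite_imageI finite_subset order_trans)
    qed
    then show ?thesis by blast
  qed
  show "\<forall>f. partial_computable f \<longrightarrow> (\<exists>cf::nat. \<forall>y x z. f x = Some z \<longrightarrow> B U z y \<le> B U x y + cf)"
  proof (intro allI impI)
    fix f :: "str \<Rightarrow> str option" assume "partial_computable f"
    from Cf[OF opt this] obtain c where c: "\<forall>x y z. f x = Some z \<longrightarrow> C U z y \<le> C U x y + c" by blast
    have "B U z y \<le> B U x y + 2 * c" if "f x = Some z" for x y z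
    proof -
      have a: "C U z [] \<le> C U x [] + c" and b: "C U z y \<le> C U x y + c" using c that by blast+
      show ?thesis unfolding Bd using a b by (simp add: min_def)
    qed
    then show "\<exists>cf::nat. \<forall>y x z. f x = Some z \<longrightarrow> B U z y \<le> B U x y + cf" by blast
  qed
  show "\<exists>e::nat. \<forall>x. B U x x \<le> e"
  proof -
    obtain c5 where c5: "\<forall>x. C U x x \<le> c5" using Cself[OF opt] by blast
    have "B U x x \<le> 2 * c5" for x using c5[rule_format, of x] unfolding Bd by simp
    then show ?thesis by blast
  qed
  show "\<forall>m::nat. \<exists>x y. enat (B U x y) + enat m < Ccond U x y \<or> Ccond U x y + enat m < enat (B U x y)"
  proof
    fix m :: nat
    obtain c1 where c1: "\<forall>x y b. C U x y \<le> C U x (b # y) + c1" using Cstep[OF opt] by blast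
    obtain c5 where c5: "\<forall>x. C U x x \<le> c5" using Cself[OF opt] by blast
    define N where "N = m + 1 + c5"
    obtain x where x: "C U x [] \<ge> N + c1 + m + 1" using incompressible[OF opt] by blast
    define g where "g i = C U x (drop i x)" for i
    have g0: "g 0 < N" using c5[rule_format, of x] unfolding g_def N_def by simp
    have gL: "N \<le> g (length x)" using x unfolding g_def by simp
    have gs: "\<forall>i<length x. g (Suc i) \<le> g i + c1"
    proof (intro allI impI)
      fix i assume "i < length x"
      then have "drop i x = x ! i # drop (Suc i) x" by (rule Cons_nth_drop_Suc[symmetric])
      then show "g (Suc i) \<le> g i + c1" unfolding g_def using c1 by metis
    qed
    obtain i where i: "N \<le> g i" "g i \<le> N + c1" using discrete_ivt[OF g0 gL gs] by blast
    define y where "y = drop i x"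
    have "C U x y + m < B U x y"
      using i x unfolding Bd g_def y_def N_def by simp
    then have "Ccond U x y + enat m < enat (B U x y)" by (simp add: Ccond_fin[OF opt])
    then show "\<exists>x y. enat (B U x y) + enat m < Ccond U x y \<or> Ccond U x y + enat m < enat (B U x y)" by blast
  qed
qed



end
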